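(* Let $\delta>0$, data $(\mathbf{x}_i,y_i)$, $i=1,\dots,n$, with $\mathbf{x}_i\in\mathbb{R}^p$, $y_i\in\{-1,1\}$, and let $P_{\lambda_1,\lambda_2}(\boldsymbol\beta)=\sum_{j=1}^p P_{\lambda_1}(|\beta_j|)+\frac{\lambda_2}{2}\|\boldsymbol\beta\|_2^2$ be a penalty function. Define $$R(\boldsymbol\beta,\beta_0)=\frac1n\sum_{i=1}^n v\big(y_i(\beta_0+\mathbf{x}_i^\top\boldsymbol\beta)\big)+P_{\lambda_1,\lambda_2}(\boldsymbol\beta),\qquad R(\boldsymbol\beta,\beta_0\mid\delta)=\frac1n\sum_{i=1}^n B_\delta\big(y_i(\beta_0+\mathbf{x}_i^\top\boldsymbol\beta)\big)+P_{\lambda_1,\lambda_2}(\boldsymbol\beta),$$ where $v(t)=(1-t)_+$. Then $$\inf_{(\boldsymbol\beta,\beta_0)}R(\boldsymbol\beta,\beta_0)\le\inf_{(\boldsymbol\beta,\beta_0)}R(\boldsymbol\beta,\beta_0\mid\delta)\le\inf_{(\boldsymbol\beta,\beta_0)}R(\boldsymbol\beta,\beta_0)+\delta.$$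
   Context: $B_\delta$ (the BernSVM loss) is defined by $B_\delta(t)=(1-t)_+$ if $|t-1|>\delta$ and $B_\delta(t)=g_\delta(t)=\frac{1}{8\delta^{3}}\{\frac{(1-t+\delta)^{4}}{2}-(1-t-\delta)(1-t+\delta)^{3}\}$ if $|t-1|\le\delta$. The penalty $P_{\lambda_1}$ may be e.g. $\lambda_1|\beta_j|$, $\lambda_1 w_j|\beta_j|$, SCAD or MCP. *)

theory Defs
  imports "HOL-Analysis.Analysis"
begin

definition hinge :: "real \<Rightarrow> real" where
  "hinge t = max (1 - t) 0"

definition bern_g :: "real \<Rightarrow> real \<Rightarrow> real" where
  "bern_g \<delta> t = (1 / (8 * \<delta>^3)) *
     ((1 - t + \<delta>)^4 / 2 - (1 - t - \<delta>) * (1 - t + \<delta>)^3)"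

definition bernsvm_loss :: "real \<Rightarrow> real \<Rightarrow> real" where
  "bernsvm_loss \<delta> t = (if \<bar>t - 1\<bar> > \<delta> then hinge t else bern_g \<delta> t)"

definition penalty :: "(real \<Rightarrow> real) \<Rightarrow> real \<Rightarrow> real^'p \<Rightarrow> real" where
  "penalty P lam2 \<beta> = (\<Sum>j\<in>UNIV. P \<bar>\<beta> $ j\<bar>) + lam2 / 2 * (norm \<beta>)^2"

definition risk :: "(real \<Rightarrow> real) \<Rightarrow> nat \<Rightarrow> (nat \<Rightarrow> real^'p) \<Rightarrow> (nat \<Rightarrow> real)
   \<Rightarrow> (real \<Rightarrow> real) \<Rightarrow> real \<Rightarrow> real^'p \<Rightarrow> real \<Rightarrow> real" where
  "risk L n x y P lam2 \<beta> \<beta>0 =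
     (1 / real n) * (\<Sum>i<n. L (y i * (\<beta>0 + x i \<bullet> \<beta>))) + penalty P lam2 \<beta>"

end

theory Submission
  imports Defs
begin

lemma bern_id:
  assumes "d > 0"
  shows "16 * d^3 * bern_g d t = ((1-t)+d)^3 * (3*d-(1-t))"
  using assms unfolding bern_g_def by (simp add: field_simps; algebra)

lemma loss_bounds:
  assumes d: "d > 0"
  shows "hinge t \<le> bernsvm_loss d t \<and> bernsvm_loss d t \<le> hinge t + d"
proof (cases "\<bar>t - 1\<bar> > d")
  case True
  then show ?thesis using d by (simp add: bernsvm_loss_def)
next
  case False
  define u where "u = 1 - t"
  have u1: "-d \<le> u" "u \<le> d" using False u_def by auto
  have id: "16 * d^3 * bern_g d t = (u+d)^3 * (3*d-u)" using bern_id[OF d] u_def by simp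
  have id2: "(u+d)^3 * (3*d-u) - 16*d^3*u = (d-u)^3*(u+3*d)" by algebra
  have d3: "16*d^3 > 0" using d by simp
  have a: "(u+d)^3 * (3*d-u) \<ge> 0" using u1 by simp
  have b: "(d-u)^3*(u+3*d) \<ge> 0" using u1 d by simp
  have g0: "bern_g d t \<ge> 0" using a id d3 by (metis zero_le_mult_iff not_less less_le)
  have gu: "bern_g d t \<ge> u"
  proof -
    have "16*d^3*(bern_g d t - u) \<ge> 0" using id id2 b by (simp add: algebra_simps)
    then show ?thesis using d3 by (simp add: zero_le_mult_iff)
  qed
  have up: "bern_g d t \<le> max u 0 + d"
  proof (cases "u \<ge> 0")
    case True
    have "(d-u)^3 \<le> d^3" using True u1 by (intro power_mono) auto
    moreover have "u + 3*d \<le> 4*d" using u1 by simp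
    ultimately have "(d-u)^3*(u+3*d) \<le> d^3*(4*d)"
      using True u1 d by (intro mult_mono) auto
    moreover have "16*d^3*(bern_g d t - u) = (d-u)^3*(u+3*d)" using id id2 by (simp add: algebra_simps)
    moreover have "d^3*(4*d) \<le> 16*d^3*d" using d by simp
    ultimately have "16*d^3*(bern_g d t - u) \<le> 16*d^3*d" by linarith
    hence "bern_g d t - u \<le> d" using d3 by simp
    then show ?thesis using True by simp
  next
    case False
    have "(u+d)^3 \<le> d^3" using False u1 by (intro power_mono) auto
    moreover have "3*d-u \<le> 4*d" using u1 by simp
    ultimately have "(u+d)^3*(3*d-u) \<le> d^3*(4*d)"
      using False u1 d by (intro mult_mono) auto
    moreover have "d^3*(4*d) \<le> 16*d^3*d" using d by simp
    ultimately have "16*d^3*bern_g d t \<le> 16*d^3*d" using id by linarith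
    hence "bern_g d t \<le> d" using d3 by simp
    then show ?thesis using False by simp
  qed
  show ?thesis using False g0 gu up u_def by (simp add: bernsvm_loss_def hinge_def)
qed

lemma risk_bounds:
  assumes d: "d > 0" and n: "n \<ge> 1"
  shows "risk hinge n x y P lam2 b b0 \<le> risk (bernsvm_loss d) n x y P lam2 b b0 \<and>
         risk (bernsvm_loss d) n x y P lam2 b b0 \<le> risk hinge n x y P lam2 b b0 + d"
proof -
  let ?h = "\<lambda>i. hinge (y i * (b0 + x i \<bullet> b))"
  let ?g = "\<lambda>i. bernsvm_loss d (y i * (b0 + x i \<bullet> b))"
  have s1: "(\<Sum>i<n. ?h i) \<le> (\<Sum>i<n. ?g i)" by (intro sum_mono) (use loss_bounds[OF d] in blast)
  have "(\<Sum>i<n. ?g i) \<le> (\<Sum>i<n. ?h i + d)" by (intro sum_mono) (use loss_bounds[OF d] in blast)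
  hence s2: "(\<Sum>i<n. ?g i) \<le> (\<Sum>i<n. ?h i) + real n * d" by (simp add: sum.distrib)
  have np: "real n > 0" using n by simp
  have A: "(1/real n) * (\<Sum>i<n. ?h i) \<le> (1/real n) * (\<Sum>i<n. ?g i)"
    using s1 np by (intro mult_left_mono) auto
  have "(1/real n) * (\<Sum>i<n. ?g i) \<le> (1/real n) * ((\<Sum>i<n. ?h i) + real n * d)"
    using s2 np by (intro mult_left_mono) auto
  also have "\<dots> = (1/real n) * (\<Sum>i<n. ?h i) + d" using np by (simp add: field_simps)
  finally show ?thesis using A unfolding risk_def by simp
qed

theorem proposition2:
  fixes \<delta> :: real and n :: nat and x :: "nat \<Rightarrow> real^'p" and y :: "nat \<Rightarrow> real"
    and P :: "real \<Rightarrow> real" and lam2 :: real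
  assumes "\<delta> > 0" and "n \<ge> 1" and "\<forall>i<n. y i \<in> {-1, 1}"
  shows "(INF b. ereal (risk hinge n x y P lam2 (fst b) (snd b)))
           \<le> (INF b. ereal (risk (bernsvm_loss \<delta>) n x y P lam2 (fst b) (snd b)))
       \<and> (INF b. ereal (risk (bernsvm_loss \<delta>) n x y P lam2 (fst b) (snd b)))
           \<le> (INF b. ereal (risk hinge n x y P lam2 (fst b) (snd b))) + ereal \<delta>"
proof
  let ?f = "\<lambda>b. risk hinge n x y P lam2 (fst b) (snd b)"
  let ?g = "\<lambda>b. risk (bernsvm_loss \<delta>) n x y P lam2 (fst b) (snd b)"
  have B: "\<And>b. ?f b \<le> ?g b \<and> ?g b \<le> ?f b + \<delta>" using risk_bounds[OF assms(1,2)] by blast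
  show "(INF b. ereal (?f b)) \<le> (INF b. ereal (?g b))"
    by (intro INF_mono) (use B in auto)
  have "(INF b. ereal (?g b)) - ereal \<delta> \<le> (INF b. ereal (?f b))"
  proof (intro INF_greatest)
    fix b :: "(real^'p) \<times> real"
    have "(INF b. ereal (?g b)) \<le> ereal (?g b)" by (rule INF_lower) simp
    also have "\<dots> \<le> ereal (?f b) + ereal \<delta>" using B by simp
    finally show "(INF b. ereal (?g b)) - ereal \<delta> \<le> ereal (?f b)"
      by (simp add: ereal_minus_le_iff)
  qed
  then show "(INF b. ereal (?g b)) \<le> (INF b. ereal (?f b)) + ereal \<delta>"
    by (simp add: ereal_minus_le_iff add.commute)
qed

end
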